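(* (a) If $S$ is a discrete semigroup with $S^2\neq S$, then $\ell^1(S)$ is not super weakly amenable. (b) Let $S=\{t,0\}$ with multiplication $t0=0t=t^2=0^2=0$. Then $\ell^1(S)$ is semiweakly amenable but not super weakly amenable.
   Context: $\ell^1(S)$ is the semigroup algebra with convolution $\delta_s*\delta_u=\delta_{su}$; $S^2=\{su:s,u\in S\}$. $\mathcal A^*$ is the dual $\mathcal A$-bimodule ($\langle x,a\cdot f\rangle=\langle xa,f\rangle$, $\langle x,f\cdot a\rangle=\langle ax,f\rangle$). A derivation $D:\mathcal A\to X$ is a bounded linear map with $D(ab)=D(a)\cdot b+a\cdot D(b)$; it is inner if $D(a)=a\cdot x-x\cdot a$ for some $x\in X$. $\mathcal A$ is semiweakly amenable if every derivation $D:\mathcal A\to\mathcal A^*$ with $\langle D(a),b\rangle+\langle D(b),a\rangle=0$ for all $a,b$ is inner. For a continuous homomorphism $\varphi:\mathcal A\to\mathcal B$, $\mathcal B_\varphi$ is $\mathcal B$ with $a\cdot b=\varphi(a)b$, $b\cdot a=b\varphi(a)$, and $\mathcal B_\varphi^*$ its dual bimodule. $\mathcal A$ is super weakly amenable if for every Banach algebra $\mathcal B$, every continuous homomorphism $\varphi:\mathcal A\to\mathcal B$ and every derivation $d:\mathcal A\to\mathcal B_\varphi^*$, $\langle d(a),\varphi(b)\rangle+\langle d(b),\varphi(a)\rangle=0$ for all $a,b$. *)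

theory Defs
  imports "HOL-Analysis.Analysis"
begin

text \<open>Complex Banach algebras are represented set-based: a carrier together with
explicit operations (there is no complex-normed-algebra type class in the library).\<close>

record 'b cbalg =
  bcarrier :: "'b set"
  bzero :: 'b
  badd :: "'b \<Rightarrow> 'b \<Rightarrow> 'b"
  bsmult :: "complex \<Rightarrow> 'b \<Rightarrow> 'b"
  bmult :: "'b \<Rightarrow> 'b \<Rightarrow> 'b"
  bnorm :: "'b \<Rightarrow> real"

definition banach_algebra :: "'b cbalg \<Rightarrow> bool" where
  "banach_algebra B \<longleftrightarrow>
    (let C = bcarrier B; add = badd B; sm = bsmult B; mul = bmult B; nr = bnorm B; z = bzero B in
     z \<in> C \<and>
     (\<forall>x\<in>C. \<forall>y\<in>C. add x y \<in> C \<and> mul x y \<in> C) \<and>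
     (\<forall>c x. x \<in> C \<longrightarrow> sm c x \<in> C) \<and>
     (\<forall>x\<in>C. \<forall>y\<in>C. \<forall>w\<in>C. add (add x y) w = add x (add y w)) \<and>
     (\<forall>x\<in>C. \<forall>y\<in>C. add x y = add y x) \<and>
     (\<forall>x\<in>C. add z x = x) \<and>
     (\<forall>x\<in>C. \<exists>y\<in>C. add x y = z) \<and>
     (\<forall>c x y. x \<in> C \<longrightarrow> y \<in> C \<longrightarrow> sm c (add x y) = add (sm c x) (sm c y)) \<and>
     (\<forall>c d x. x \<in> C \<longrightarrow> sm (c + d) x = add (sm c x) (sm d x)) \<and>
     (\<forall>c d x. x \<in> C \<longrightarrow> sm (c * d) x = sm c (sm d x)) \<and>
     (\<forall>x\<in>C. sm 1 x = x) \<and>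
     (\<forall>x\<in>C. \<forall>y\<in>C. \<forall>w\<in>C. mul (mul x y) w = mul x (mul y w)) \<and>
     (\<forall>x\<in>C. \<forall>y\<in>C. \<forall>w\<in>C. mul x (add y w) = add (mul x y) (mul x w)) \<and>
     (\<forall>x\<in>C. \<forall>y\<in>C. \<forall>w\<in>C. mul (add x y) w = add (mul x w) (mul y w)) \<and>
     (\<forall>c x y. x \<in> C \<longrightarrow> y \<in> C \<longrightarrow>
        mul (sm c x) y = sm c (mul x y) \<and> mul x (sm c y) = sm c (mul x y)) \<and>
     (\<forall>x\<in>C. nr x = 0 \<longleftrightarrow> x = z) \<and>
     (\<forall>x\<in>C. \<forall>y\<in>C. nr (add x y) \<le> nr x + nr y) \<and>
     (\<forall>c x. x \<in> C \<longrightarrow> nr (sm c x) = cmod c * nr x) \<and>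
     (\<forall>x\<in>C. \<forall>y\<in>C. nr (mul x y) \<le> nr x * nr y) \<and>
     (\<forall>X :: nat \<Rightarrow> 'b. (\<forall>n. X n \<in> C) \<longrightarrow>
        (\<forall>e>0. \<exists>N. \<forall>m\<ge>N. \<forall>n\<ge>N. nr (add (X m) (sm (-1) (X n))) < e) \<longrightarrow>
        (\<exists>L\<in>C. \<forall>e>0. \<exists>N. \<forall>n\<ge>N. nr (add (X n) (sm (-1) L)) < e)))"

definition bounded_functional :: "'b cbalg \<Rightarrow> ('b \<Rightarrow> complex) \<Rightarrow> bool" where
  "bounded_functional B F \<longleftrightarrow>
    (\<forall>x\<in>bcarrier B. \<forall>y\<in>bcarrier B. F (badd B x y) = F x + F y) \<and>
    (\<forall>c. \<forall>x\<in>bcarrier B. F (bsmult B c x) = c * F x) \<and>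
    (\<exists>K. \<forall>x\<in>bcarrier B. cmod (F x) \<le> K * bnorm B x)"

definition cont_hom :: "'a cbalg \<Rightarrow> 'b cbalg \<Rightarrow> ('a \<Rightarrow> 'b) \<Rightarrow> bool" where
  "cont_hom A B \<phi> \<longleftrightarrow>
    (\<forall>a\<in>bcarrier A. \<phi> a \<in> bcarrier B) \<and>
    (\<forall>a\<in>bcarrier A. \<forall>b\<in>bcarrier A. \<phi> (badd A a b) = badd B (\<phi> a) (\<phi> b)) \<and>
    (\<forall>c. \<forall>a\<in>bcarrier A. \<phi> (bsmult A c a) = bsmult B c (\<phi> a)) \<and>
    (\<forall>a\<in>bcarrier A. \<forall>b\<in>bcarrier A. \<phi> (bmult A a b) = bmult B (\<phi> a) (\<phi> b)) \<and>
    (\<exists>K. \<forall>a\<in>bcarrier A. bnorm B (\<phi> a) \<le> K * bnorm A a)"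

text \<open>An element of the dual is a functional on the
carrier of B; the module actions are  (F . a)(x) = F(phi(a) x) and (a . F)(x) = F(x phi(a)),
i.e. <x, a.F> = <x.a, F> and <x, F.a> = <a.x, F> in B_phi.\<close>
definition dual_derivation :: "'a cbalg \<Rightarrow> 'b cbalg \<Rightarrow> ('a \<Rightarrow> 'b) \<Rightarrow> ('a \<Rightarrow> 'b \<Rightarrow> complex) \<Rightarrow> bool" where
  "dual_derivation A B \<phi> d \<longleftrightarrow>
    (\<forall>a\<in>bcarrier A. bounded_functional B (d a)) \<and>
    (\<forall>a\<in>bcarrier A. \<forall>b\<in>bcarrier A. \<forall>x\<in>bcarrier B. d (badd A a b) x = d a x + d b x) \<and>
    (\<forall>c. \<forall>a\<in>bcarrier A. \<forall>x\<in>bcarrier B. d (bsmult A c a) x = c * d a x) \<and>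
    (\<exists>K. \<forall>a\<in>bcarrier A. \<forall>x\<in>bcarrier B. cmod (d a x) \<le> K * bnorm A a * bnorm B x) \<and>
    (\<forall>a\<in>bcarrier A. \<forall>b\<in>bcarrier A. \<forall>x\<in>bcarrier B.
        d (bmult A a b) x = d a (bmult B (\<phi> b) x) + d b (bmult B x (\<phi> a)))"

text \<open>Super weak amenability, with the quantified Banach algebras B ranging over
Banach algebras whose elements have type 'b.\<close>
definition super_weakly_amenable :: "'b itself \<Rightarrow> 'a cbalg \<Rightarrow> bool" where
  "super_weakly_amenable (_ :: 'b itself) A \<longleftrightarrow>
    (\<forall>B :: 'b cbalg. \<forall>\<phi> d. banach_algebra B \<longrightarrow> cont_hom A B \<phi> \<longrightarrow> dual_derivation A B \<phi> d \<longrightarrow>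
       (\<forall>a\<in>bcarrier A. \<forall>b\<in>bcarrier A. d a (\<phi> b) + d b (\<phi> a) = 0))"

text \<open>Semiweak amenability: derivations D : A \<rightarrow> A^* with <D a, b> + <D b, a> = 0 are inner.
A^* is (A_id)^*; the inner derivation given by F is  D a = a.F - F.a.\<close>
definition semiweakly_amenable :: "'a cbalg \<Rightarrow> bool" where
  "semiweakly_amenable A \<longleftrightarrow>
    (\<forall>D. dual_derivation A A id D \<longrightarrow>
       (\<forall>a\<in>bcarrier A. \<forall>b\<in>bcarrier A. D a b + D b a = 0) \<longrightarrow>
       (\<exists>F. bounded_functional A F \<and>
          (\<forall>a\<in>bcarrier A. \<forall>y\<in>bcarrier A. D a y = F (bmult A y a) - F (bmult A a y))))"

definition l1_alg :: "('a::semigroup_mult \<Rightarrow> complex) cbalg" where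
  "l1_alg = cbalg.make
     {f. (\<lambda>s. norm (f s)) summable_on UNIV}
     (\<lambda>_. 0)
     (\<lambda>f g s. f s + g s)
     (\<lambda>c f s. c * f s)
     (\<lambda>f g x. infsum (\<lambda>(s, u). f s * g u) {(s, u). s * u = x})
     (\<lambda>f. infsum (\<lambda>s. norm (f s)) UNIV)"

end

theory Submission imports Defs begin

lemma l1_simps:
  "bcarrier (l1_alg :: ('a::semigroup_mult \<Rightarrow> complex) cbalg) = {f. (\<lambda>s. norm (f s)) summable_on UNIV}"
  "bzero (l1_alg :: ('a::semigroup_mult \<Rightarrow> complex) cbalg) = (\<lambda>_. 0)"
  "badd (l1_alg :: ('a::semigroup_mult \<Rightarrow> complex) cbalg) = (\<lambda>f g s. f s + g s)"
  "bsmult (l1_alg :: ('a::semigroup_mult \<Rightarrow> complex) cbalg) = (\<lambda>c f s. c * f s)"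
  "bmult (l1_alg :: ('a::semigroup_mult \<Rightarrow> complex) cbalg) = (\<lambda>f g x. infsum (\<lambda>(s, u). f s * g u) {(s, u). s * u = x})"
  "bnorm (l1_alg :: ('a::semigroup_mult \<Rightarrow> complex) cbalg) = (\<lambda>f. infsum (\<lambda>s. norm (f s)) UNIV)"
  by (simp_all add: l1_alg_def cbalg.defs)

lemma point_le_norm:
  fixes a :: "'a \<Rightarrow> complex"
  assumes "(\<lambda>s. norm (a s)) summable_on UNIV"
  shows "cmod (a s0) \<le> infsum (\<lambda>s. norm (a s)) UNIV"
proof -
  have "infsum (\<lambda>s. norm (a s)) {s0} \<le> infsum (\<lambda>s. norm (a s)) UNIV"
    by (rule infsum_mono_neutral) (use assms in auto)
  then show ?thesis by simp
qed

lemma delta_summable: "(\<lambda>s. norm (if s = s0 then (1::complex) else 0)) summable_on UNIV"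
proof -
  have "(\<lambda>s. norm (if s = s0 then (1::complex) else 0)) summable_on {s0}" by simp
  then show ?thesis
    by (rule summable_on_cong_neutral[THEN iffD1, rotated -1]) auto
qed

definition B0 :: "'c \<Rightarrow> ('c \<Rightarrow> complex) cbalg" where
  "B0 s0 = cbalg.make {f. \<exists>c. f = (\<lambda>_. c)} (\<lambda>_. 0) (\<lambda>f g s. f s + g s) (\<lambda>c f s. c * f s)
      (\<lambda>f g s. 0) (\<lambda>f. cmod (f s0))"

lemma B0_simps:
  "bcarrier (B0 s0) = {f. \<exists>c. f = (\<lambda>_. c)}"
  "bzero (B0 s0) = (\<lambda>_. 0)"
  "badd (B0 s0) = (\<lambda>f g s. f s + g s)"
  "bsmult (B0 s0) = (\<lambda>c f s. c * f s)"
  "bmult (B0 s0) = (\<lambda>f g s. 0)"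
  "bnorm (B0 s0) = (\<lambda>f. cmod (f s0))"
  by (simp_all add: B0_def cbalg.defs)

lemma neg_const_ex: "\<exists>y. (\<exists>c. \<forall>x. y x = c) \<and> (\<forall>x. (c::complex) + y x = 0)"
  by (rule exI[of _ "\<lambda>_. - c"]) auto

lemma B0_banach: "banach_algebra (B0 (s0::'c))"
  unfolding banach_algebra_def Let_def B0_simps
proof (intro conjI)
  show "\<forall>X :: nat \<Rightarrow> 'c \<Rightarrow> complex. (\<forall>n. X n \<in> {f. \<exists>c. f = (\<lambda>_. c)}) \<longrightarrow>
        (\<forall>e>0. \<exists>N. \<forall>m\<ge>N. \<forall>n\<ge>N. cmod (X m s0 + - 1 * X n s0) < e) \<longrightarrow>
        (\<exists>L\<in>{f. \<exists>c. f = (\<lambda>_. c)}. \<forall>e>0. \<exists>N. \<forall>n\<ge>N. cmod (X n s0 + - 1 * L s0) < e)"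
  proof (intro allI impI)
    fix X :: "nat \<Rightarrow> 'c \<Rightarrow> complex"
    assume C: "\<forall>n. X n \<in> {f. \<exists>c. f = (\<lambda>_. c)}"
      and Ca: "\<forall>e>0. \<exists>N. \<forall>m\<ge>N. \<forall>n\<ge>N. cmod (X m s0 + - 1 * X n s0) < e"
    have "Cauchy (\<lambda>n. X n s0)"
    proof (rule metric_CauchyI)
      fix e :: real assume "e > 0"
      then obtain N where "\<forall>m\<ge>N. \<forall>n\<ge>N. cmod (X m s0 + - 1 * X n s0) < e" using Ca by blast
      then show "\<exists>M. \<forall>m\<ge>M. \<forall>n\<ge>M. dist (X m s0) (X n s0) < e"
        by (auto simp: dist_norm)
    qed
    then obtain L where L: "(\<lambda>n. X n s0) \<longlonglongrightarrow> L"
      using Cauchy_convergent_iff convergent_def by blast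
    show "\<exists>L\<in>{f. \<exists>c. f = (\<lambda>_. c)}. \<forall>e>0. \<exists>N. \<forall>n\<ge>N. cmod (X n s0 + - 1 * L s0) < e"
    proof (intro bexI allI impI)
      fix e :: real assume "e > 0"
      then obtain N where "\<forall>n\<ge>N. dist (X n s0) L < e" using L metric_LIMSEQ_D by blast
      then show "\<exists>N. \<forall>n\<ge>N. cmod (X n s0 + - 1 * (\<lambda>_. L) s0) < e"
        by (auto simp: dist_norm)
    qed auto
  qed
qed (auto simp: algebra_simps norm_mult fun_eq_iff norm_triangle_ineq neg_const_ex intro: exI[of _ "\<lambda>_. 0"])

lemma not_swa:
  fixes s0 :: "'c::semigroup_mult"
  assumes s0: "\<And>s u. s * u \<noteq> s0"
  shows "\<not> super_weakly_amenable TYPE('c \<Rightarrow> complex) (l1_alg :: ('c \<Rightarrow> complex) cbalg)"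
proof
  assume H: "super_weakly_amenable TYPE('c \<Rightarrow> complex) (l1_alg :: ('c \<Rightarrow> complex) cbalg)"
  define \<phi> :: "('c \<Rightarrow> complex) \<Rightarrow> ('c \<Rightarrow> complex)" where "\<phi> = (\<lambda>a _. a s0)"
  define d :: "('c \<Rightarrow> complex) \<Rightarrow> ('c \<Rightarrow> complex) \<Rightarrow> complex" where "d = (\<lambda>a x. a s0 * x s0)"
  define \<delta> :: "'c \<Rightarrow> complex" where "\<delta> = (\<lambda>s. if s = s0 then 1 else 0)"
  have mult0: "infsum (\<lambda>(s, u). a s * b u) {(s, u). s * u = s0} = (0::complex)" for a b :: "'c \<Rightarrow> complex"
    using s0 by simp
  have ch: "cont_hom l1_alg (B0 s0) \<phi>"
    unfolding cont_hom_def
  proof (intro conjI)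
    show "\<exists>K. \<forall>a\<in>bcarrier l1_alg. bnorm (B0 s0) (\<phi> a) \<le> K * bnorm l1_alg a"
      by (rule exI[of _ 1]) (auto simp: B0_simps l1_simps \<phi>_def intro: point_le_norm)
  qed (auto simp: B0_simps \<phi>_def mult0 l1_simps)
  have dd: "dual_derivation l1_alg (B0 s0) \<phi> d"
    unfolding dual_derivation_def
  proof (intro conjI)
    show "\<forall>a\<in>bcarrier l1_alg. bounded_functional (B0 s0) (d a)"
      unfolding bounded_functional_def
      by (auto simp: B0_simps d_def algebra_simps norm_mult intro!: exI[of _ "cmod (a s0)" for a])
    show "\<exists>K. \<forall>a\<in>bcarrier l1_alg. \<forall>x\<in>bcarrier (B0 s0). cmod (d a x) \<le> K * bnorm l1_alg a * bnorm (B0 s0) x"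
      by (rule exI[of _ 1]) (auto simp: B0_simps l1_simps d_def norm_mult intro!: mult_right_mono point_le_norm)
  qed (auto simp: B0_simps l1_simps d_def mult0 algebra_simps)
  have "\<delta> \<in> bcarrier l1_alg" using delta_summable[of s0] by (simp add: l1_simps \<delta>_def)
  with H ch dd B0_banach[of s0] have "d \<delta> (\<phi> \<delta>) + d \<delta> (\<phi> \<delta>) = 0"
    unfolding super_weakly_amenable_def by blast
  then show False by (simp add: d_def \<phi>_def \<delta>_def)
qed

lemma swa_two:
  fixes t z :: "'a::semigroup_mult"
  assumes U: "(UNIV :: 'a set) = {t, z}" and tz: "t \<noteq> z" and M: "\<forall>x y :: 'a. x * y = z"
  shows "semiweakly_amenable (l1_alg :: ('a \<Rightarrow> complex) cbalg)"
  unfolding semiweakly_amenable_def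
proof (intro allI impI)
  fix D :: "('a \<Rightarrow> complex) \<Rightarrow> ('a \<Rightarrow> complex) \<Rightarrow> complex"
  assume dd: "dual_derivation l1_alg l1_alg id D"
    and anti: "\<forall>a\<in>bcarrier l1_alg. \<forall>b\<in>bcarrier l1_alg. D a b + D b a = 0"
  have fin: "finite (UNIV :: 'a set)" unfolding U by simp
  have car: "bcarrier (l1_alg :: ('a \<Rightarrow> complex) cbalg) = UNIV"
    using fin by (auto simp: l1_simps intro: summable_on_finite)
  have mul: "bmult (l1_alg :: ('a \<Rightarrow> complex) cbalg) a b = (\<lambda>x. if x = z then (a t + a z) * (b t + b z) else 0)" for a b
  proof
    fix x
    show "bmult (l1_alg :: ('a \<Rightarrow> complex) cbalg) a b x = (if x = z then (a t + a z) * (b t + b z) else 0)"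
    proof (cases "x = z")
      case True
      have S: "{(s, u). s * u = x} = {t, z} \<times> {t, z}" using True M U by auto
      have "bmult (l1_alg :: ('a \<Rightarrow> complex) cbalg) a b x = (\<Sum>(s, u)\<in>{t, z} \<times> {t, z}. a s * b u)"
        by (simp add: l1_simps S)
      also have "\<dots> = (\<Sum>s\<in>{t,z}. a s) * (\<Sum>u\<in>{t,z}. b u)"
        by (simp add: sum_product sum.cartesian_product)
      finally show ?thesis using True tz by simp
    next
      case False
      then have S: "{(s, u). s * u = x} = {}" using M by auto
      show ?thesis using False by (simp add: l1_simps S)
    qed
  qed
  define u :: "'a \<Rightarrow> complex" where "u = (\<lambda>s. if s = t then 1 else 0)"
  define e :: "'a \<Rightarrow> complex" where "e = (\<lambda>s. if s = z then 1 else 0)"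
  have decomp: "a = badd l1_alg (bsmult l1_alg (a t) u) (bsmult l1_alg (a z) e)" for a :: "'a \<Rightarrow> complex"
  proof
    fix s
    have "s = t \<or> s = z" using U by auto
    then show "a s = badd l1_alg (bsmult l1_alg (a t) u) (bsmult l1_alg (a z) e) s"
      using tz by (auto simp: l1_simps u_def e_def)
  qed
  have addD: "D (badd l1_alg a b) y = D a y + D b y" and smD: "D (bsmult l1_alg c a) y = c * D a y"
    and bf: "bounded_functional l1_alg (D a)"
    and der: "D (bmult l1_alg a b) y = D a (bmult l1_alg b y) + D b (bmult l1_alg y a)"
    for a b c y
    using dd car unfolding dual_derivation_def by auto
  have lin1: "D a y = a t * D u y + a z * D e y" for a y
    by (subst decomp[of a]) (simp add: addD smD)
  have lin2: "D a y = y t * D a u + y z * D a e" for a y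
  proof -
    have "D a y = D a (badd l1_alg (bsmult l1_alg (y t) u) (bsmult l1_alg (y z) e))"
      by (subst decomp[of y]) simp
    also have "\<dots> = y t * D a u + y z * D a e"
      using bf[of a] car unfolding bounded_functional_def by simp
    finally show ?thesis .
  qed
  have "D u u + D u u = 0" using anti car by simp
  then have uu: "D u u = 0" by (simp flip: mult_2)
  have "D e e + D e e = 0" using anti car by simp
  then have ee: "D e e = 0" by (simp flip: mult_2)
  have ue_prod: "bmult l1_alg u e = e" "bmult l1_alg e u = e" "bmult l1_alg u u = e"
    using tz by (auto simp: mul u_def e_def fun_eq_iff)
  have "D e e = D u e + D u e" using der[of u u e] ue_prod by simp
  then have ue: "D u e = 0" using ee by simp
  have "D u e + D e u = 0" using anti car by simp
  then have eu: "D e u = 0" using ue by simp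
  have D0: "D a y = 0" for a y
    using lin1[of a y] lin2[of u y] lin2[of e y] uu ue eu ee by simp
  show "\<exists>F. bounded_functional l1_alg F \<and>
          (\<forall>a\<in>bcarrier l1_alg. \<forall>y\<in>bcarrier l1_alg. D a y = F (bmult l1_alg y a) - F (bmult l1_alg a y))"
    by (rule exI[of _ "\<lambda>_. 0"]) (auto simp: bounded_functional_def D0 intro: exI[of _ 0])
qed

theorem mainTheorem13:
  fixes t z :: "'a::semigroup_mult"
  shows "({s * u | s u. True} \<noteq> (UNIV :: 'c::semigroup_mult set) \<longrightarrow>
           \<not> super_weakly_amenable TYPE('c \<Rightarrow> complex) (l1_alg :: ('c \<Rightarrow> complex) cbalg))
       \<and> ((UNIV :: 'a set) = {t, z} \<and> t \<noteq> z \<and> (\<forall>x y :: 'a. x * y = z) \<longrightarrow>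
           semiweakly_amenable (l1_alg :: ('a \<Rightarrow> complex) cbalg) \<and>
           \<not> super_weakly_amenable TYPE('a \<Rightarrow> complex) (l1_alg :: ('a \<Rightarrow> complex) cbalg))"
proof (intro conjI impI)
  assume "{s * u | s u. True} \<noteq> (UNIV :: 'c::semigroup_mult set)"
  then obtain s0 :: 'c where "s0 \<notin> {s * u | s u. True}" by blast
  then have "\<And>s u. s * u \<noteq> s0" by blast
  then show "\<not> super_weakly_amenable TYPE('c \<Rightarrow> complex) (l1_alg :: ('c \<Rightarrow> complex) cbalg)"
    by (rule not_swa)
next
  assume H: "(UNIV :: 'a set) = {t, z} \<and> t \<noteq> z \<and> (\<forall>x y :: 'a. x * y = z)"
  then show "semiweakly_amenable (l1_alg :: ('a \<Rightarrow> complex) cbalg)"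
    using swa_two by blast
  from H have "\<And>s u. s * u \<noteq> t" by auto
  then show "\<not> super_weakly_amenable TYPE('a \<Rightarrow> complex) (l1_alg :: ('a \<Rightarrow> complex) cbalg)"
    by (rule not_swa)
qed

end
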